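(* For integers $d\ge1$, $m\ge1$ and all $B>0$, \[\sup_{f\in\mathcal F_{d,m,B}}\|p_f\|_{C^m}=\Theta_{m,d}\big(\max\{1,B\}^{m+d}\big),\] and this asymptotic rate is attained by $f_{d,m,B}(x)=Bd^{-1}(x_1+\cdots+x_d)$, i.e. $\|p_{f_{d,m,B}}\|_{C^m}=\Theta_{m,d}(\max\{1,B\}^{m+d})$.
   Context: $\mathcal X=[0,1]^d$ with Lebesgue measure. For bounded measurable $f$: $Z_f=\int_{\mathcal X}e^f dx$ and $p_f=e^f/Z_f$. $\|h\|_{C^m}=\sup_{\alpha\in\mathbb N_0^d,|\alpha|_1\le m}\|\partial^\alpha h\|_\infty$ and $\mathcal F_{d,m,B}=\{f\in C^m(\mathcal X):\|f\|_{C^m}\le B\}$. $\Theta_{m,d}$: both sides bounded by each other up to positive constants depending only on $m,d$, uniformly in $B>0$. *)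

theory Defs
  imports "HOL-Analysis.Analysis"
begin

definition cube :: "(real^'n::finite) set" where
  "cube = {x. \<forall>i. 0 \<le> x$i \<and> x$i \<le> 1}"

definition line_fun :: "'n::finite \<Rightarrow> (real^'n \<Rightarrow> real) \<Rightarrow> real^'n \<Rightarrow> real \<Rightarrow> real" where
  "line_fun i g x = (\<lambda>t. g (\<chi> j. if j = i then t else x$j))"

text \<open>Partial derivative in coordinate i, taken within the cube (one-sided at the boundary).\<close>
definition pd :: "'n::finite \<Rightarrow> (real^'n \<Rightarrow> real) \<Rightarrow> real^'n \<Rightarrow> real" where
  "pd i g x = vector_derivative (line_fun i g x) (at (x$i) within {0..1})"

definition pd_exists :: "'n::finite \<Rightarrow> (real^'n \<Rightarrow> real) \<Rightarrow> real^'n \<Rightarrow> bool" where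
  "pd_exists i g x \<longleftrightarrow> line_fun i g x differentiable (at (x$i) within {0..1})"

text \<open>Iterated partial derivative along a list of coordinates (last element applied first).\<close>
fun dpart :: "'n::finite list \<Rightarrow> (real^'n \<Rightarrow> real) \<Rightarrow> real^'n \<Rightarrow> real" where
  "dpart [] g = g"
| "dpart (i # is) g = pd i (dpart is g)"

definition Cm_on :: "nat \<Rightarrow> (real^'n::finite \<Rightarrow> real) \<Rightarrow> bool" where
  "Cm_on m g \<longleftrightarrow>
     (\<forall>is. length is < m \<longrightarrow> (\<forall>i. \<forall>x\<in>cube. pd_exists i (dpart is g) x)) \<and>
     (\<forall>is. length is \<le> m \<longrightarrow> continuous_on cube (dpart is g))"

definition Cm_norm :: "nat \<Rightarrow> (real^'n::finite \<Rightarrow> real) \<Rightarrow> ereal" where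
  "Cm_norm m g = (SUP p\<in>{(is, x). length is \<le> m \<and> x \<in> cube}. ereal \<bar>dpart (fst p) g (snd p)\<bar>)"

definition Fclass :: "nat \<Rightarrow> real \<Rightarrow> (real^'n::finite \<Rightarrow> real) set" where
  "Fclass m B = {f. Cm_on m f \<and> Cm_norm m f \<le> ereal B}"

definition Zf :: "(real^'n::finite \<Rightarrow> real) \<Rightarrow> real" where
  "Zf f = integral cube (\<lambda>x. exp (f x))"

definition dens :: "(real^'n::finite \<Rightarrow> real) \<Rightarrow> real^'n \<Rightarrow> real" where
  "dens f = (\<lambda>x. exp (f x) / Zf f)"

definition f_lin :: "real \<Rightarrow> real^'n::finite \<Rightarrow> real" where
  "f_lin B = (\<lambda>x. B / real CARD('n) * (\<Sum>i\<in>UNIV. x$i))"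

end

theory Submission
  imports Defs
begin

lemma cube_cbox: "(cube :: (real^'n::finite) set) = cbox 0 1"
  by (auto simp: cube_def mem_box_cart)

lemma line_in_cube: "x \<in> cube \<Longrightarrow> t \<in> {0..1} \<Longrightarrow> (\<chi> j. if j = i then t else x$j) \<in> cube"
  by (auto simp: cube_def)

lemma line_at: "(\<chi> j. if j = i then x$i else x$j) = x"
  by (simp add: vec_eq_iff)

lemma line_fun_at: "line_fun i g x (x$i) = g x"
  by (simp add: line_fun_def line_at)

lemma cube_coord: "x \<in> cube \<Longrightarrow> x$i \<in> {0..1::real}"
  by (auto simp: cube_def)

lemma pd_intro:
  assumes "x \<in> cube" "(line_fun i g x has_vector_derivative D) (at (x$i) within {0..1})"
  shows "pd_exists i g x \<and> pd i g x = D"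
proof -
  have "pd i g x = D" unfolding pd_def
    by (rule vector_derivative_within_closed_interval) (use assms cube_coord in auto)
  moreover have "pd_exists i g x" unfolding pd_exists_def using assms(2)
    by (auto simp: differentiable_def has_vector_derivative_def)
  ultimately show ?thesis by blast
qed

lemma pd_works:
  assumes "pd_exists i g x"
  shows "(line_fun i g x has_vector_derivative pd i g x) (at (x$i) within {0..1})"
  using assms unfolding pd_exists_def pd_def by (simp add: vector_derivative_works)

lemma pd_works_real:
  assumes "pd_exists i g x"
  shows "(line_fun i g x has_real_derivative pd i g x) (at (x$i) within {0..1})"
  using pd_works[OF assms] by (simp add: has_real_derivative_iff_has_vector_derivative)

lemma line_cong_gen:
  assumes "x \<in> cube" "\<forall>y\<in>cube. g y = h y"
  shows "(line_fun i g x has_derivative D) (at (x$i) within {0..1}) \<longleftrightarrow>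
         (line_fun i h x has_derivative D) (at (x$i) within {0..1})"
proof -
  have eq: "\<And>t. t \<in> {0..1} \<Longrightarrow> line_fun i g x t = line_fun i h x t"
    using assms line_in_cube[OF assms(1)] by (auto simp: line_fun_def)
  show ?thesis
    using has_derivative_transform[of "x$i" "{0..1}", OF cube_coord[OF assms(1)]] eq
    by metis
qed

lemma pd_cong:
  assumes "x \<in> cube" "\<forall>y\<in>cube. g y = h y"
  shows "pd i g x = pd i h x \<and> (pd_exists i g x \<longleftrightarrow> pd_exists i h x)"
  using line_cong_gen[OF assms, of i]
  unfolding pd_def pd_exists_def vector_derivative_def differentiable_def has_vector_derivative_def
  by auto


lemma pd_mult:
  assumes x: "x \<in> cube" and g: "pd_exists i g x" and h: "pd_exists i h x"
  shows "pd_exists i (\<lambda>y. g y * h y) x \<and> pd i (\<lambda>y. g y * h y) x = pd i g x * h x + g x * pd i h x"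
proof -
  have e: "line_fun i (\<lambda>y. g y * h y) x = (\<lambda>t. line_fun i g x t * line_fun i h x t)"
    by (simp add: line_fun_def)
  have "(line_fun i (\<lambda>y. g y * h y) x has_real_derivative pd i g x * h x + g x * pd i h x) (at (x$i) within {0..1})"
    unfolding e using DERIV_mult[OF pd_works_real[OF g] pd_works_real[OF h]]
    by (simp add: line_fun_at algebra_simps)
  then show ?thesis using pd_intro[OF x] by (simp add: has_real_derivative_iff_has_vector_derivative)
qed

lemma pd_add:
  assumes x: "x \<in> cube" and g: "pd_exists i g x" and h: "pd_exists i h x"
  shows "pd_exists i (\<lambda>y. g y + h y) x \<and> pd i (\<lambda>y. g y + h y) x = pd i g x + pd i h x"
proof -
  have e: "line_fun i (\<lambda>y. g y + h y) x = (\<lambda>t. line_fun i g x t + line_fun i h x t)"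
    by (simp add: line_fun_def)
  have "(line_fun i (\<lambda>y. g y + h y) x has_real_derivative pd i g x + pd i h x) (at (x$i) within {0..1})"
    unfolding e using DERIV_add[OF pd_works_real[OF g] pd_works_real[OF h]] by simp
  then show ?thesis using pd_intro[OF x] by (simp add: has_real_derivative_iff_has_vector_derivative)
qed

lemma pd_const:
  assumes x: "x \<in> cube"
  shows "pd_exists i (\<lambda>y. c) x \<and> pd i (\<lambda>y. c) x = 0"
proof -
  have e: "line_fun i (\<lambda>y. c) x = (\<lambda>t. c)" by (simp add: line_fun_def)
  have "(line_fun i (\<lambda>y. c) x has_real_derivative 0) (at (x$i) within {0..1})"
    unfolding e by simp
  then show ?thesis using pd_intro[OF x] by (simp add: has_real_derivative_iff_has_vector_derivative)
qed

lemma pd_expdiv: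
  assumes x: "x \<in> cube" and g: "pd_exists i g x"
  shows "pd_exists i (\<lambda>y. exp (g y) / Z) x \<and> pd i (\<lambda>y. exp (g y) / Z) x = exp (g x) / Z * pd i g x"
proof -
  have e: "line_fun i (\<lambda>y. exp (g y) / Z) x = (\<lambda>t. exp (line_fun i g x t) / Z)"
    by (simp add: line_fun_def)
  have "(line_fun i (\<lambda>y. exp (g y) / Z) x has_real_derivative exp (g x) / Z * pd i g x) (at (x$i) within {0..1})"
    unfolding e using DERIV_cdivide[OF DERIV_exp[THEN DERIV_chain2, OF pd_works_real[OF g]], of Z]
    by (simp add: line_fun_at)
  then show ?thesis using pd_intro[OF x] by (simp add: has_real_derivative_iff_has_vector_derivative)
qed

fun good :: "real \<Rightarrow> nat \<Rightarrow> nat \<Rightarrow> real \<Rightarrow> (real^'n::finite \<Rightarrow> real) \<Rightarrow> bool" where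
  "good M 0 k c h = (\<forall>x\<in>cube. \<bar>h x\<bar> \<le> c * M^k)"
| "good M (Suc r) k c h = ((\<forall>x\<in>cube. \<bar>h x\<bar> \<le> c * M^k) \<and> (\<forall>i. \<forall>x\<in>cube. pd_exists i h x)
      \<and> (\<forall>i. good M r (Suc k) (real k * c) (pd i h)))"

lemma good_bound: "good M r k c h \<Longrightarrow> x \<in> cube \<Longrightarrow> \<bar>h x\<bar> \<le> c * M^k"
  by (cases r) auto

lemma good_mono: "good M (Suc r) k c h \<Longrightarrow> good M r k c h"
proof (induction r arbitrary: k c h)
  case 0 then show ?case by simp
next
  case (Suc r) then show ?case by auto
qed

lemma good_cong: "good M r k c g \<Longrightarrow> \<forall>x\<in>cube. g x = h x \<Longrightarrow> good M r k c h"
proof (induction r arbitrary: k c g h)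
  case 0 then show ?case by simp
next
  case (Suc r)
  have b: "\<forall>x\<in>cube. \<bar>h x\<bar> \<le> c * M^k" using Suc.prems by auto
  have e: "\<forall>x\<in>cube. pd_exists i h x" for i
  proof
    fix x :: "real^'a" assume "x \<in> cube"
    then show "pd_exists i h x" using Suc.prems pd_cong[of x g h i] by auto
  qed
  have d: "good M r (Suc k) (real k * c) (pd i h)" for i
  proof -
    have "\<forall>x\<in>cube. pd i g x = pd i h x" using Suc.prems(2) pd_cong[of _ g h i] by blast
    then show ?thesis using Suc.IH[of "Suc k" "real k * c" "pd i g" "pd i h"] Suc.prems by auto
  qed
  show ?case using b e d by simp
qed

lemma good_add: "good M r k c g \<Longrightarrow> good M r k c' h \<Longrightarrow> good M r k (c + c') (\<lambda>x. g x + h x)"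
proof (induction r arbitrary: k c c' g h)
  case 0 then show ?case by (auto simp: distrib_right intro: order.trans[OF abs_triangle_ineq] add_mono)
next
  case (Suc r)
  have b: "\<forall>x\<in>cube. \<bar>g x + h x\<bar> \<le> (c + c') * M^k" using Suc.prems
    by (auto simp: distrib_right intro: order.trans[OF abs_triangle_ineq] add_mono)
  have e: "\<forall>x\<in>cube. pd_exists i (\<lambda>x. g x + h x) x" for i using Suc.prems pd_add[of _ i g h] by auto
  have d: "good M r (Suc k) (real k * (c + c')) (pd i (\<lambda>x. g x + h x))" for i
  proof -
    have h1: "good M r (Suc k) (real k * c + real k * c') (\<lambda>x. pd i g x + pd i h x)"
      using Suc.IH Suc.prems by auto
    have c: "\<forall>x\<in>cube. pd i g x + pd i h x = pd i (\<lambda>x. g x + h x) x"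
      using Suc.prems pd_add[of _ i g h] by auto
    show ?thesis unfolding distrib_left by (rule good_cong[OF h1 c])
  qed
  show ?case using b e d by simp
qed

lemma abs_mult_bound:
  fixes u v :: real
  assumes "\<bar>u\<bar> \<le> c * M^a" "\<bar>v\<bar> \<le> c' * M^b"
  shows "\<bar>u * v\<bar> \<le> c * c' * M^(a+b)"
proof -
  have "\<bar>u * v\<bar> = \<bar>u\<bar> * \<bar>v\<bar>" by (simp add: abs_mult)
  also have "\<dots> \<le> (c * M^a) * (c' * M^b)"
    by (rule mult_mono) (use assms in auto)
  also have "\<dots> = c * c' * M^(a+b)" by (simp add: power_add)
  finally show ?thesis .
qed

lemma good_mult: "0 \<le> c \<Longrightarrow> 0 \<le> c' \<Longrightarrow> good M r a c g \<Longrightarrow> good M r b c' h \<Longrightarrow>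
   good M r (a + b) (c * c') (\<lambda>x. g x * h x)"
proof (induction r arbitrary: a b c c' g h)
  case 0 then show ?case by (auto intro: abs_mult_bound)
next
  case (Suc r)
  have b: "\<forall>x\<in>cube. \<bar>g x * h x\<bar> \<le> (c * c') * M^(a+b)" using Suc.prems
    by (auto intro: abs_mult_bound)
  have e: "\<forall>x\<in>cube. pd_exists i (\<lambda>x. g x * h x) x" for i using Suc.prems pd_mult[of _ i g h] by auto
  have d: "good M r (Suc (a+b)) (real (a+b) * (c * c')) (pd i (\<lambda>x. g x * h x))" for i
  proof -
    have g1: "good M r (Suc a) (real a * c) (pd i g)" "good M r a c g" 
      using Suc.prems(3) good_mono[OF Suc.prems(3)] by auto
    have h1: "good M r (Suc b) (real b * c') (pd i h)" "good M r b c' h" 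
      using Suc.prems(4) good_mono[OF Suc.prems(4)] by auto
    have p1: "good M r (Suc (a + b)) (real a * c * c') (\<lambda>x. pd i g x * h x)"
      using Suc.IH[OF _ _ g1(1) h1(2)] Suc.prems(1,2) by simp
    have p2: "good M r (Suc (a + b)) (c * (real b * c')) (\<lambda>x. g x * pd i h x)"
      using Suc.IH[OF _ _ g1(2) h1(1)] Suc.prems(1,2) by simp
    have "good M r (Suc (a+b)) (real a * c * c' + c * (real b * c')) (\<lambda>x. pd i g x * h x + g x * pd i h x)"
      using good_add[OF p1 p2] by simp
    moreover have "real a * c * c' + c * (real b * c') = real (a+b) * (c * c')"
      by (simp add: algebra_simps)
    moreover have "\<forall>x\<in>cube. pd i g x * h x + g x * pd i h x = pd i (\<lambda>x. g x * h x) x"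
      using Suc.prems(3,4) pd_mult[of _ i g h] by simp
    ultimately show ?thesis
      using good_cong[of M r "Suc (a+b)" "real (a+b) * (c * c')" "\<lambda>x. pd i g x * h x + g x * pd i h x"] by metis
  qed
  show ?case using b e d by simp
qed

lemma good_zero: "good M r k 0 (\<lambda>x::real^'n::finite. 0::real)"
proof (induction r arbitrary: k)
  case 0 then show ?case by simp
next
  case (Suc r)
  have "good M r (Suc k) (real k * 0) (pd i (\<lambda>x::real^'n. 0::real))" for i
    using good_cong[OF Suc.IH[of "Suc k"], of "pd i (\<lambda>x::real^'n. 0::real)"] pd_const by fastforce
  then show ?case using pd_const by auto
qed

lemma good_one: "good M r 0 1 (\<lambda>x::real^'n::finite. 1::real)"
proof (cases r)
  case 0 then show ?thesis by simp
next
  case (Suc r')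
  have "good M r' 1 (real 0 * 1) (pd i (\<lambda>x::real^'n. 1::real))" for i
    using good_cong[OF good_zero[of M r' 1], of "pd i (\<lambda>x::real^'n. 1::real)"] pd_const by fastforce
  then show ?thesis using pd_const Suc by auto
qed


lemma good_dpart:
  fixes f :: "real^'n::finite \<Rightarrow> real"
  assumes cm: "Cm_on m f" and hb: "\<forall>js x. length js \<le> m \<longrightarrow> x \<in> cube \<longrightarrow> \<bar>dpart js f x\<bar> \<le> B"
    and BM: "B \<le> M" and M1: "1 \<le> M"
  shows "1 \<le> length js \<Longrightarrow> length js + r \<le> m \<Longrightarrow> 1 \<le> c \<Longrightarrow> good M r (length js) c (dpart js f)"
proof (induction r arbitrary: js c)
  case 0
  have "M ^ 1 \<le> M ^ length js" by (rule power_increasing) (use 0 M1 in auto)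
  moreover have "M ^ length js \<le> c * M ^ length js"
    using 0 M1 by (simp add: mult_le_cancel_right1)
  ultimately have Bc: "B \<le> c * M ^ length js" using BM by simp
  show ?case
  proof (simp only: good.simps, intro ballI)
    fix x :: "real^'n" assume "x \<in> cube"
    then have "\<bar>dpart js f x\<bar> \<le> B" using hb 0 by simp
    then show "\<bar>dpart js f x\<bar> \<le> c * M ^ length js" using Bc by linarith
  qed
next
  case (Suc r)
  have "M ^ 1 \<le> M ^ length js" by (rule power_increasing) (use Suc M1 in auto)
  moreover have "M ^ length js \<le> c * M ^ length js"
    using Suc M1 by (simp add: mult_le_cancel_right1)
  ultimately have Bc: "B \<le> c * M ^ length js" using BM by simp
  have len: "length js \<le> m" using Suc.prems by simp
  have b: "\<forall>x\<in>cube. \<bar>dpart js f x\<bar> \<le> c * M ^ length js"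
  proof
    fix x :: "real^'n" assume "x \<in> cube"
    then have "\<bar>dpart js f x\<bar> \<le> B" using hb len by simp
    then show "\<bar>dpart js f x\<bar> \<le> c * M ^ length js" using Bc by linarith
  qed
  have e: "\<forall>i. \<forall>x\<in>cube. pd_exists i (dpart js f) x" using cm Suc.prems unfolding Cm_on_def by auto
  have d: "good M r (Suc (length js)) (real (length js) * c) (pd i (dpart js f))" for i
  proof -
    have l1: "1 \<le> real (length js)" using Suc.prems by simp
    have "1 * 1 \<le> real (length js) * c" by (rule mult_mono[OF l1 Suc.prems(3)]) auto
    then have "1 \<le> real (length js) * c" by simp
    then show ?thesis using Suc.IH[of "i # js"] Suc.prems by simp
  qed
  show ?case using b e d by simp
qed

lemma dens_deriv:
  assumes cm: "Cm_on m f" and hb: "\<forall>js x. length js \<le> m \<longrightarrow> x \<in> cube \<longrightarrow> \<bar>dpart js f x\<bar> \<le> B"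
    and BM: "B \<le> M" and M1: "1 \<le> M"
  shows "length is \<le> m \<Longrightarrow> \<exists>Q. good M (m - length is) (length is) (fact (length is)) Q \<and>
      (\<forall>x\<in>cube. dpart is (\<lambda>y. exp (f y) / Z) x = exp (f x) / Z * Q x)"
proof (induction "is")
  case Nil
  show ?case by (rule exI[of _ "\<lambda>x. 1"]) (simp add: good_one)
next
  case (Cons i "is")
  let ?g = "\<lambda>y. exp (f y) / Z"
  let ?k = "length is"
  obtain Q where Qg: "good M (m - ?k) ?k (fact ?k) Q" and Qe: "\<forall>x\<in>cube. dpart is ?g x = ?g x * Q x"
    using Cons by auto
  define r where "r = m - Suc ?k"
  have mr: "m - ?k = Suc r" using Cons.prems unfolding r_def by simp
  have fex: "pd_exists i f x" if "x \<in> cube" for x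
    using cm that assms unfolding Cm_on_def by (metis Cons.prems dpart.simps(1) le_zero_eq list.size(3) length_greater_0_conv list.distinct(1) not_le) 
  have Qg': "good M (Suc r) ?k (fact ?k) Q" using Qg mr by simp
  have Qex: "pd_exists i Q x" if "x \<in> cube" for x using Qg' that by simp
  have pdQ: "good M r (Suc ?k) (real ?k * fact ?k) (pd i Q)" using Qg' by simp
  have Qr: "good M r ?k (fact ?k) Q" using good_mono[OF Qg'] .
  have pf: "good M r (length [i]) 1 (dpart [i] f)"
    by (rule good_dpart[OF cm hb BM M1]) (use Cons.prems r_def in auto)
  have pf': "good M r 1 1 (pd i f)" using pf by simp
  have prod: "good M r (Suc ?k) (1 * fact ?k) (\<lambda>x. pd i f x * Q x)"
    using good_mult[OF _ _ pf' Qr] by simp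
  have sum: "good M r (Suc ?k) (1 * fact ?k + real ?k * fact ?k) (\<lambda>x. pd i f x * Q x + pd i Q x)"
    using good_add[OF prod pdQ] by simp
  have cst: "1 * fact ?k + real ?k * fact ?k = (fact (Suc ?k) :: real)"
    by (simp add: algebra_simps)
  have eq: "dpart (i # is) ?g x = ?g x * (pd i f x * Q x + pd i Q x)" if x: "x \<in> cube" for x
  proof -
    have "dpart (i # is) ?g x = pd i (dpart is ?g) x" by simp
    also have "\<dots> = pd i (\<lambda>y. ?g y * Q y) x" using pd_cong[OF x Qe] by blast
    also have "\<dots> = pd i ?g x * Q x + ?g x * pd i Q x"
      using pd_mult[OF x _ Qex[OF x], of ?g] pd_expdiv[OF x fex[OF x]] by simp
    also have "\<dots> = ?g x * (pd i f x * Q x + pd i Q x)"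
      using pd_expdiv[OF x fex[OF x], of Z] by (simp add: algebra_simps)
    finally show ?thesis .
  qed
  show ?case
    by (rule exI[of _ "\<lambda>x. pd i f x * Q x + pd i Q x"]) (use sum cst eq mr r_def in auto)
qed


lemma line_lip:
  assumes cm: "Cm_on m f" and m1: "1 \<le> m" and pb: "\<forall>x\<in>cube. \<forall>i. \<bar>pd i f x\<bar> \<le> B"
    and z: "z \<in> cube" and s: "s \<in> {0..1}" and t: "t \<in> {0..1}"
  shows "\<bar>line_fun i f z t - line_fun i f z s\<bar> \<le> B * \<bar>t - s\<bar>"
proof -
  have d: "(line_fun i f z has_field_derivative pd i f (\<chi> j. if j = i then u else z$j)) (at u within {0..1})"
    "\<bar>pd i f (\<chi> j. if j = i then u else z$j)\<bar> \<le> B" if u: "u \<in> {0..1}" for u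
  proof -
    let ?p = "(\<chi> j. if j = i then u else z$j)"
    have p: "?p \<in> cube" by (rule line_in_cube[OF z u])
    have lf: "line_fun i f ?p = line_fun i f z"
      by (auto simp: line_fun_def fun_eq_iff intro!: arg_cong[where f=f])
    have "pd_exists i f ?p" using cm m1 p unfolding Cm_on_def
      by (metis dpart.simps(1) less_one list.size(3) order_less_le_trans zero_less_one)
    from pd_works_real[OF this] show "(line_fun i f z has_field_derivative pd i f ?p) (at u within {0..1})"
      using lf by simp
    show "\<bar>pd i f ?p\<bar> \<le> B" using pb p by blast
  qed
  have "norm (line_fun i f z t - line_fun i f z s) \<le> B * norm (t - s)"
    by (rule field_differentiable_bound[where S="{0..1}" and f'="\<lambda>u. pd i f (\<chi> j. if j = i then u else z$j)"])
       (use d s t in auto)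
  then show ?thesis by simp
qed

lemma lipschitz_f:
  assumes cm: "Cm_on m f" and m1: "1 \<le> m" and pb: "\<forall>x\<in>cube. \<forall>i. \<bar>pd i f x\<bar> \<le> B"
    and x: "x \<in> cube" and y: "y \<in> cube"
  shows "\<bar>f y - f x\<bar> \<le> B * (\<Sum>j\<in>UNIV. \<bar>y$j - x$j\<bar>)"
proof -
  have "\<bar>f (\<chi> j. if j \<in> S then y$j else x$j) - f x\<bar> \<le> B * (\<Sum>j\<in>S. \<bar>y$j - x$j\<bar>)" if "finite S" for S
    using that
  proof (induction S rule: finite_induct)
    case empty
    have "(\<chi> j. if j \<in> {} then y$j else x$j) = x" by (simp add: vec_eq_iff)
    then show ?case by simp
  next
    case (insert i S)
    let ?z = "(\<chi> j. if j \<in> S then y$j else x$j)"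
    have zc: "?z \<in> cube" using x y by (auto simp: cube_def)
    have e1: "(\<chi> j. if j \<in> insert i S then y$j else x$j) = (\<chi> j. if j = i then y$i else ?z$j)"
      by (auto simp: vec_eq_iff)
    have e2: "?z $ i = x $ i" using insert by simp
    have "\<bar>line_fun i f ?z (y$i) - line_fun i f ?z (?z$i)\<bar> \<le> B * \<bar>y$i - ?z$i\<bar>"
      by (rule line_lip[OF cm m1 pb zc]) (use x y zc cube_coord in auto)
    then have "\<bar>f (\<chi> j. if j \<in> insert i S then y$j else x$j) - f ?z\<bar> \<le> B * \<bar>y$i - x$i\<bar>"
      unfolding e1 line_fun_at using e2 by (simp add: line_fun_def)
    then show ?case using insert by (simp add: distrib_left)
  qed
  from this[of UNIV] have "\<bar>f (\<chi> j. if j \<in> UNIV then y$j else x$j) - f x\<bar> \<le> B * (\<Sum>j\<in>UNIV. \<bar>y$j - x$j\<bar>)" by simp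
  moreover have "(\<chi> j. if j \<in> UNIV then y$j else x$j) = y" by (simp add: vec_eq_iff)
  ultimately show ?thesis by simp
qed


lemma Z_lower:
  fixes f :: "real^'n::finite \<Rightarrow> real"
  assumes cm: "Cm_on m f" and m1: "1 \<le> m" and pb: "\<forall>x\<in>cube. \<forall>i. \<bar>pd i f x\<bar> \<le> B"
    and B0: "0 \<le> B" and x: "x \<in> cube"
  shows "0 < Zf f \<and> exp (f x) / Zf f \<le> exp (real CARD('n)) * (max 1 B) ^ CARD('n)"
proof -
  define M where "M = max 1 B"
  define s where "s = 1 / M"
  define d where "d = real CARD('n)"
  have M1: "1 \<le> M" and BM: "B \<le> M" unfolding M_def by auto
  have s0: "0 < s" and s1: "s \<le> 1" unfolding s_def using M1 by auto
  have Bs: "B * s \<le> 1" unfolding s_def using BM M1 by (simp add: divide_le_eq_1)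
  define l :: "real^'n" where "l = (\<chi> j. min (x$j) (1 - s))"
  define u :: "real^'n" where "u = (\<chi> j. min (x$j) (1 - s) + s)"
  have x01: "0 \<le> x$j" "x$j \<le> 1" for j using x by (auto simp: cube_def)
  have sub: "cbox l u \<subseteq> cube"
  proof
    fix y assume "y \<in> cbox l u"
    then have h: "l$j \<le> y$j \<and> y$j \<le> u$j" for j by (simp add: mem_box_cart)
    show "y \<in> cube" unfolding cube_def
    proof (intro CollectI allI conjI)
      fix j
      have "min (x$j) (1 - s) \<le> y$j \<and> y$j \<le> min (x$j) (1 - s) + s" using h[of j] by (simp add: l_def u_def)
      then show "0 \<le> y$j" "y$j \<le> 1" using x01[of j] s1 s0 by (auto simp: min_def split: if_splits)
    qed
  qed
  have close: "\<bar>y$j - x$j\<bar> \<le> s" if "y \<in> cbox l u" for y j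
  proof -
    have "l$j \<le> y$j" "y$j \<le> u$j" using that by (auto simp: mem_box_cart)
    then show ?thesis unfolding l_def u_def using x01[of j] by (auto simp: abs_le_iff)
  qed
  have fy: "f x - d \<le> f y" if y: "y \<in> cbox l u" for y
  proof -
    have "\<bar>f y - f x\<bar> \<le> B * (\<Sum>j\<in>UNIV. \<bar>y$j - x$j\<bar>)"
      by (rule lipschitz_f[OF cm m1 pb x]) (use sub y in auto)
    also have "\<dots> \<le> B * (\<Sum>j\<in>(UNIV::'n set). s)"
      by (rule mult_left_mono[OF sum_mono]) (use close y B0 in auto)
    also have "\<dots> = (B * s) * d" unfolding d_def by simp
    also have "\<dots> \<le> d" using Bs unfolding d_def by (simp add: mult_le_cancel_right1)
    finally show ?thesis by simp
  qed
  have contf: "continuous_on cube f" using cm unfolding Cm_on_def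
    by (metis dpart.simps(1) le0 list.size(3))
  then have conte: "continuous_on cube (\<lambda>y. exp (f y))" by (intro continuous_intros)
  have ic: "(\<lambda>y. exp (f y)) integrable_on cube" unfolding cube_cbox
    by (rule integrable_continuous) (use conte in \<open>simp add: cube_cbox\<close>)
  have ib: "(\<lambda>y. exp (f y)) integrable_on cbox l u"
    by (rule integrable_continuous) (rule continuous_on_subset[OF conte sub])
  have ne: "cbox l u \<noteq> {}" unfolding box_ne_empty(1) l_def u_def using s0
    by (simp add: inner_axis Basis_vec_def)
  have cont: "measure lborel (cbox l u) = s ^ CARD('n)"
    using content_cbox_cart[OF ne] unfolding l_def u_def by simp
  have "s ^ CARD('n) * exp (f x - d) = integral (cbox l u) (\<lambda>y. exp (f x - d))"
    using cont by simp
  also have "\<dots> \<le> integral (cbox l u) (\<lambda>y. exp (f y))"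
    by (rule integral_le) (use ib fy in auto)
  also have "\<dots> \<le> integral cube (\<lambda>y. exp (f y))"
    by (rule integral_subset_le[OF sub ib ic]) auto
  finally have Zl: "s ^ CARD('n) * exp (f x - d) \<le> Zf f" unfolding Zf_def .
  have pos: "0 < s ^ CARD('n) * exp (f x - d)" using s0 by simp
  have Z0: "0 < Zf f" using Zl pos by linarith
  have "exp (f x) / Zf f \<le> exp (f x) / (s ^ CARD('n) * exp (f x - d))"
    by (rule divide_left_mono[OF Zl]) (use pos Z0 in auto)
  also have "\<dots> = exp d * M ^ CARD('n)"
    unfolding s_def using M1 by (simp add: exp_diff field_simps power_one_over)
  finally show ?thesis using Z0 unfolding d_def M_def by simp
qed


lemma hb_of_Fclass:
  assumes "f \<in> Fclass m B" "length js \<le> m" "x \<in> cube"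
  shows "\<bar>dpart js f x\<bar> \<le> B"
proof -
  have "ereal \<bar>dpart js f x\<bar> \<le> Cm_norm m f" unfolding Cm_norm_def
    by (rule SUP_upper2[of "(js, x)"]) (use assms in auto)
  also have "\<dots> \<le> ereal B" using assms unfolding Fclass_def by auto
  finally show ?thesis by simp
qed

lemma upper_one:
  fixes f :: "real^'n::finite \<Rightarrow> real"
  assumes m1: "1 \<le> m" and fF: "f \<in> Fclass m B" and B0: "0 < B"
  shows "Cm_norm m (dens f) \<le> ereal (exp (real CARD('n)) * fact m * max 1 B ^ (m + CARD('n)))"
proof -
  define M where "M = max 1 B"
  have M1: "1 \<le> M" and BM: "B \<le> M" unfolding M_def by auto
  have cm: "Cm_on m f" using fF unfolding Fclass_def by auto
  have hb: "\<forall>js x. length js \<le> m \<longrightarrow> x \<in> cube \<longrightarrow> \<bar>dpart js f x\<bar> \<le> B"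
    using hb_of_Fclass[OF fF] by blast
  have pb: "\<forall>x\<in>cube. \<forall>i. \<bar>pd i f x\<bar> \<le> B"
  proof (intro ballI allI)
    fix x :: "real^'n" and i :: 'n assume "x \<in> cube"
    then have "\<bar>dpart [i] f x\<bar> \<le> B" by (intro hb_of_Fclass[OF fF]) (use m1 in simp_all)
    then show "\<bar>pd i f x\<bar> \<le> B" by simp
  qed
  have de: "dens f = (\<lambda>y. exp (f y) / Zf f)" unfolding dens_def ..
  show ?thesis unfolding Cm_norm_def
  proof (rule SUP_least)
    fix p :: "'n list \<times> (real^'n)" assume "p \<in> {(is, x). length is \<le> m \<and> x \<in> cube}"
    then obtain "is" x where p: "p = (is, x)" and len: "length is \<le> m" and x: "x \<in> cube" by auto
    obtain Q where Qg: "good M (m - length is) (length is) (fact (length is)) Q"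
      and Qe: "\<forall>x\<in>cube. dpart is (\<lambda>y. exp (f y) / Zf f) x = exp (f x) / Zf f * Q x"
      using dens_deriv[OF cm hb BM M1 len] by blast
    have Qb: "\<bar>Q x\<bar> \<le> fact (length is) * M ^ length is" using good_bound[OF Qg x] .
    have Zl: "0 < Zf f" "exp (f x) / Zf f \<le> exp (real CARD('n)) * M ^ CARD('n)"
      using Z_lower[OF cm m1 pb _ x] B0 unfolding M_def by auto
    have "dpart is (dens f) x = exp (f x) / Zf f * Q x" using Qe x unfolding de by blast
    then have "\<bar>dpart is (dens f) x\<bar> = \<bar>exp (f x) / Zf f\<bar> * \<bar>Q x\<bar>" by (simp only: abs_mult)
    also have "\<bar>exp (f x) / Zf f\<bar> = exp (f x) / Zf f" using Zl(1) by simp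
    finally have "\<bar>dpart is (dens f) x\<bar> = exp (f x) / Zf f * \<bar>Q x\<bar>" .
    also have "\<dots> \<le> (exp (real CARD('n)) * M ^ CARD('n)) * (fact (length is) * M ^ length is)"
      by (rule mult_mono[OF Zl(2) Qb]) (use M1 in simp_all)
    also have "\<dots> \<le> (exp (real CARD('n)) * M ^ CARD('n)) * (fact m * M ^ m)"
    proof (rule mult_left_mono)
      have f1: "(fact (length is)::real) \<le> fact m" by (rule fact_mono[OF len])
      have p1: "M ^ length is \<le> M ^ m" by (rule power_increasing[OF len M1])
      show "fact (length is) * M ^ length is \<le> fact m * M ^ m"
        by (rule mult_mono[OF f1 p1]) (use M1 in simp_all)
      show "0 \<le> exp (real CARD('n)) * M ^ CARD('n)" using M1 by simp
    qed
    also have "\<dots> = exp (real CARD('n)) * fact m * M ^ (m + CARD('n))"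
      by (simp add: power_add algebra_simps)
    finally show "ereal \<bar>dpart (fst p) (dens f) (snd p)\<bar> \<le> ereal (exp (real CARD('n)) * fact m * max 1 B ^ (m + CARD('n)))"
      using p M_def by simp
  qed
qed


lemma Z_lin:
  fixes a :: real
  assumes a0: "0 < a"
  shows "integral (cube::(real^'n::finite) set) (\<lambda>x. exp (a * (\<Sum>j\<in>UNIV. x$j))) = ((exp a - 1) / a) ^ CARD('n)"
proof -
  define F where "F = (\<lambda>x::real^'n. exp (a * (\<Sum>j\<in>UNIV. x$j)))"
  define q where "q = (exp a - 1) / a"
  define g where "g = (\<lambda>t::real. ennreal (indicator {0..1} t * exp (a * t)))"
  have contF: "continuous_on (cbox 0 1) F" unfolding F_def by (intro continuous_intros)
  have int: "(F has_integral integral cube F) cube"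
    unfolding cube_cbox by (rule integrable_integral[OF integrable_continuous[OF contF]])
  have N: "(\<integral>\<^sup>+ x. ennreal (indicator cube x * F x) \<partial>lborel) = ennreal (integral cube F)"
    by (rule nn_integral_has_integral_lebesgue[OF _ int]) (simp add: F_def)
  have P: "ennreal (indicator cube x * F x) = (\<Prod>b\<in>Basis. g (x \<bullet> b))" for x :: "real^'n"
  proof -
    have "(\<Prod>b\<in>Basis. g (x \<bullet> b)) = (\<Prod>j\<in>UNIV. g (x \<bullet> axis j 1))"
    proof -
      have B: "(Basis :: (real^'n) set) = (\<lambda>j. axis j 1) ` UNIV" by (auto simp: Basis_vec_def)
      have "inj (\<lambda>j::'n. axis j (1::real))" by (simp add: inj_def axis_eq_axis)
      then show ?thesis unfolding B by (simp add: prod.reindex)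
    qed
    also have "\<dots> = (\<Prod>j\<in>UNIV. g (x $ j))" by (simp add: inner_axis)
    also have "\<dots> = ennreal (\<Prod>j\<in>UNIV. indicator {0..1} (x$j) * exp (a * x$j))"
      unfolding g_def by (rule prod_ennreal) simp
    also have "(\<Prod>j\<in>UNIV. indicator {0..1} (x$j) * exp (a * x$j)) = indicator cube x * F x"
    proof (cases "x \<in> cube")
      case True
      then have "\<forall>j. x$j \<in> {0..1}" by (auto simp: cube_def)
      then show ?thesis using True unfolding F_def
        by (simp add: exp_sum sum_distrib_left)
    next
      case False
      then obtain j where "x$j \<notin> {0..1}" by (auto simp: cube_def)
      then have "(\<Prod>j\<in>UNIV. indicator {0..1} (x$j) * exp (a * x$j)) = (0::real)"
        by (intro prod_zero bexI[of _ j]) auto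
      then show ?thesis using False by simp
    qed
    finally show ?thesis ..
  qed
  have der: "((\<lambda>t. exp (a * t) / a) has_vector_derivative exp (a * t)) (at t within {0..1})" for t
  proof -
    have "((\<lambda>t. exp (a * t) / a) has_real_derivative exp (a * t) * a / a) (at t within {0..1})"
      by (intro derivative_eq_intros) (use a0 in auto)
    then show ?thesis using a0 by (simp add: has_real_derivative_iff_has_vector_derivative)
  qed
  have i1: "((\<lambda>t. exp (a * t)) has_integral q) {0..1}"
    using fundamental_theorem_of_calculus[of 0 1 "\<lambda>t. exp (a * t) / a" "\<lambda>t. exp (a * t)"] der
    unfolding q_def by (simp add: diff_divide_distrib)
  have g1: "integral\<^sup>N lborel g = ennreal q"
    unfolding g_def by (rule nn_integral_has_integral_lebesgue[OF _ i1]) simp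
  have PP: "(\<lambda>x. ennreal (indicator cube x * F x)) = (\<lambda>x::real^'n. \<Prod>b\<in>Basis. g (x \<bullet> b))"
    by (rule ext) (rule P)
  have "ennreal (integral cube F) = (\<integral>\<^sup>+ x. (\<Prod>b\<in>Basis. g ((x::real^'n) \<bullet> b)) \<partial>lborel)"
    using N[unfolded PP, symmetric] .
  also have "\<dots> = (\<Prod>b\<in>(Basis::(real^'n) set). integral\<^sup>N lborel g)"
    by (rule nn_integral_lborel_prod) (auto simp: g_def)
  also have "\<dots> = ennreal (q ^ CARD('n))"
    using g1 q_def a0 by (simp add: prod_ennreal ennreal_power)
  finally have "ennreal (integral cube F) = ennreal (q ^ CARD('n))" .
  moreover have "0 \<le> integral cube F" 
    by (rule integral_nonneg[OF has_integral_integrable[OF int]]) (simp add: F_def)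
  moreover have "0 \<le> q" unfolding q_def using a0 by simp
  ultimately show ?thesis unfolding F_def q_def by simp
qed
lemma flin_line:
  fixes x :: "real^'n::finite"
  shows "line_fun i (f_lin B) x = (\<lambda>t. B / real CARD('n) * t + B / real CARD('n) * (\<Sum>j\<in>UNIV-{i}. x$j))"
proof
  fix t
  have "(\<Sum>j\<in>UNIV. (\<chi> j. if j = i then t else x$j) $ j) = (\<Sum>j\<in>UNIV. if j = i then t else x$j)"
    by simp
  also have "\<dots> = (if i = i then t else x$i) + (\<Sum>j\<in>UNIV-{i}. if j = i then t else x$j)"
    by (rule sum.remove) auto
  also have "(\<Sum>j\<in>UNIV-{i}. if j = i then t else x$j) = (\<Sum>j\<in>UNIV-{i}. x$j)"
    by (rule sum.cong) auto
  finally have s: "(\<Sum>j\<in>UNIV. (\<chi> j. if j = i then t else x$j) $ j) = t + (\<Sum>j\<in>UNIV-{i}. x$j)" by simp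
  have "line_fun i (f_lin B) x t = B / real CARD('n) * (\<Sum>j\<in>UNIV. (\<chi> j. if j = i then t else x$j) $ j)"
    unfolding line_fun_def f_lin_def by (rule refl)
  also have "\<dots> = B / real CARD('n) * t + B / real CARD('n) * (\<Sum>j\<in>UNIV-{i}. x$j)"
    unfolding s by (rule distrib_left)
  finally show "line_fun i (f_lin B) x t = B / real CARD('n) * t + B / real CARD('n) * (\<Sum>j\<in>UNIV-{i}. x$j)" .
qed
lemma flin_pd:
  fixes x :: "real^'n::finite"
  assumes x: "x \<in> cube"
  shows "pd_exists i (f_lin B) x \<and> pd i (f_lin B) x = B / real CARD('n)"
proof -
  have "(line_fun i (f_lin B) x has_real_derivative B / real CARD('n)) (at (x$i) within {0..1})"
    unfolding flin_line by (intro derivative_eq_intros) auto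
  then show ?thesis using pd_intro[OF x] by (simp add: has_real_derivative_iff_has_vector_derivative)
qed

lemma flin_dpart:
  fixes js :: "'n::finite list"
  shows "(\<forall>x\<in>cube. dpart js (f_lin B) x =
      (if js = [] then f_lin B x else if length js = 1 then B / real CARD('n) else 0)) \<and>
    (\<forall>i. \<forall>x\<in>cube. pd_exists i (dpart js (f_lin B)) x)"
proof (induction js)
  case Nil then show ?case using flin_pd by auto
next
  case (Cons k js)
  show ?case
  proof (cases "js = []")
    case True
    have v: "\<forall>x\<in>cube. dpart (k # js) (f_lin B) x = B / real CARD('n)"
      using True flin_pd by auto
    have e: "\<forall>i. \<forall>x\<in>cube. pd_exists i (dpart (k # js) (f_lin B)) x"
    proof (intro allI ballI)
      fix i and x :: "real^'n" assume x: "x \<in> cube"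
      show "pd_exists i (dpart (k # js) (f_lin B)) x"
        using pd_cong[OF x v, of i] pd_const[OF x] by auto
    qed
    show ?thesis using v e True by simp
  next
    case False
    define c where "c = (if length js = 1 then B / real CARD('n) else 0)"
    have cj: "\<forall>x\<in>cube. dpart js (f_lin B) x = c" using Cons.IH False unfolding c_def by auto
    have v: "\<forall>x\<in>cube. dpart (k # js) (f_lin B) x = 0"
      using pd_cong[OF _ cj] pd_const by fastforce
    have e: "\<forall>i. \<forall>x\<in>cube. pd_exists i (dpart (k # js) (f_lin B)) x"
    proof (intro allI ballI)
      fix i and x :: "real^'n" assume x: "x \<in> cube"
      show "pd_exists i (dpart (k # js) (f_lin B)) x"
        using pd_cong[OF x v, of i] pd_const[OF x] by auto
    qed
    show ?thesis using v e False by simp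
  qed
qed

lemma flin_sum_bounds:
  fixes x :: "real^'n::finite"
  assumes "x \<in> cube"
  shows "0 \<le> (\<Sum>j\<in>UNIV. x$j) \<and> (\<Sum>j\<in>UNIV. x$j) \<le> real CARD('n)"
proof -
  have "0 \<le> x$j" "x$j \<le> 1" for j using assms by (auto simp: cube_def)
  then show ?thesis using sum_nonneg[of UNIV "\<lambda>j. x$j"] sum_mono[of UNIV "\<lambda>j. x$j" "\<lambda>j. 1"] by auto
qed

lemma flin_Fclass:
  assumes B0: "0 < B"
  shows "(f_lin B :: real^'n::finite \<Rightarrow> real) \<in> Fclass m B"
proof -
  define a where "a = B / real CARD('n)"
  have d1: "1 \<le> real CARD('n)" by simp
  have a0: "0 < a" and aB: "a \<le> B" unfolding a_def using B0 d1 by (auto simp: divide_le_eq)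
  have cont: "continuous_on cube (dpart js (f_lin B :: real^'n \<Rightarrow> real))" for js :: "'n list"
  proof -
    have cf: "continuous_on cube (f_lin B :: real^'n \<Rightarrow> real)"
      unfolding f_lin_def by (intro continuous_intros)
    have "continuous_on cube (\<lambda>x::real^'n. if js = [] then f_lin B x else if length js = 1 then B / real CARD('n) else 0)"
      by (cases "js = []") (use cf in auto)
    then show ?thesis
      by (rule continuous_on_eq) (use flin_dpart[of js B, THEN conjunct1] in simp)
  qed
  have cm: "Cm_on m (f_lin B :: real^'n \<Rightarrow> real)"
    unfolding Cm_on_def using flin_dpart cont by blast
  have bnd: "\<bar>dpart js (f_lin B) x\<bar> \<le> B" if x: "x \<in> cube" for js and x :: "real^'n"
  proof -
    have s: "0 \<le> (\<Sum>j\<in>UNIV. x$j)" "(\<Sum>j\<in>UNIV. x$j) \<le> real CARD('n)" using flin_sum_bounds[OF x] by auto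
    have "\<bar>f_lin B x\<bar> \<le> B"
    proof -
      have "f_lin B x = a * (\<Sum>j\<in>UNIV. x$j)" unfolding f_lin_def a_def by simp
      then have "\<bar>f_lin B x\<bar> = a * (\<Sum>j\<in>UNIV. x$j)" using s a0 by simp
      also have "\<dots> \<le> a * real CARD('n)" using s a0 by (intro mult_left_mono) auto
      also have "\<dots> = B" unfolding a_def by simp
      finally show ?thesis .
    qed
    moreover have "dpart js (f_lin B) x =
      (if js = [] then f_lin B x else if length js = 1 then B / real CARD('n) else 0)"
      using flin_dpart[of js B, THEN conjunct1] x by blast
    ultimately show ?thesis using aB a0 B0 unfolding a_def by (simp split: if_splits)
  qed
  have "Cm_norm m (f_lin B :: real^'n \<Rightarrow> real) \<le> ereal B"
    unfolding Cm_norm_def by (rule SUP_least) (use bnd in auto)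
  then show ?thesis unfolding Fclass_def using cm by simp
qed

lemma flin_dens_rep:
  fixes i :: "'n::finite"
  shows "\<forall>x\<in>cube. dpart (replicate k i) (dens (f_lin B :: real^'n \<Rightarrow> real)) x
     = (B / real CARD('n)) ^ k * dens (f_lin B) x"
proof (induction k)
  case 0 then show ?case by simp
next
  case (Suc k)
  let ?a = "B / real CARD('n)"
  let ?f = "f_lin B :: real^'n \<Rightarrow> real"
  let ?Z = "Zf ?f"
  have de: "dens ?f y = exp (?f y) / ?Z" for y unfolding dens_def ..
  have eqc: "\<forall>y\<in>cube. dpart (replicate k i) (dens ?f) y = ?a ^ k * (exp (?f y) / ?Z)"
    using Suc.IH de by metis
  show ?case
  proof
    fix x :: "real^'n" assume x: "x \<in> cube"
    have fe: "pd_exists i ?f x" "pd i ?f x = ?a" using flin_pd[OF x] by auto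
    have c1: "pd_exists i (\<lambda>y::real^'n. ?a ^ k) x \<and> pd i (\<lambda>y::real^'n. ?a ^ k) x = 0" by (rule pd_const[OF x])
    have c2: "pd_exists i (\<lambda>y. exp (?f y) / ?Z) x \<and> pd i (\<lambda>y. exp (?f y) / ?Z) x = exp (?f x) / ?Z * pd i ?f x"
      by (rule pd_expdiv[OF x fe(1)])
    have m: "pd i (\<lambda>y. ?a ^ k * (exp (?f y) / ?Z)) x
        = pd i (\<lambda>y::real^'n. ?a ^ k) x * (exp (?f x) / ?Z) + ?a ^ k * pd i (\<lambda>y. exp (?f y) / ?Z) x"
      using pd_mult[OF x c1[THEN conjunct1] c2[THEN conjunct1]] by blast
    have "dpart (replicate (Suc k) i) (dens ?f) x = pd i (dpart (replicate k i) (dens ?f)) x" by simp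
    also have "\<dots> = pd i (\<lambda>y. ?a ^ k * (exp (?f y) / ?Z)) x"
      using pd_cong[OF x eqc] by blast
    also have "\<dots> = ?a ^ k * (exp (?f x) / ?Z * ?a)"
      unfolding m c1[THEN conjunct2] c2[THEN conjunct2] fe(2) by simp
    also have "\<dots> = ?a ^ Suc k * dens ?f x" unfolding de by (simp add: algebra_simps)
    finally show "dpart (replicate (Suc k) i) (dens ?f) x = ?a ^ Suc k * dens ?f x" .
  qed
qed


lemma lower_lin:
  assumes B0: "0 < B"
  shows "ereal ((1 / real CARD('n)) ^ (m + CARD('n)) * max 1 B ^ (m + CARD('n)))
     \<le> Cm_norm m (dens (f_lin B :: real^'n::finite \<Rightarrow> real))"
proof -
  define n where "n = CARD('n)"
  define d where "d = real n"
  define a where "a = B / d"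
  define q where "q = (exp a - 1) / a"
  define one :: "real^'n" where "one = (\<chi> j. 1)"
  let ?f = "f_lin B :: real^'n \<Rightarrow> real"
  have d1: "1 \<le> d" unfolding d_def n_def by simp
  have a0: "0 < a" unfolding a_def using B0 d1 by simp
  have Bad: "B = a * d" unfolding a_def using d1 by simp
  have one: "one \<in> cube" unfolding one_def cube_def by simp
  have fone: "?f one = B" unfolding f_lin_def one_def using d1 by (simp add: d_def n_def)
  have Zeq: "Zf ?f = q ^ n"
  proof -
    have "Zf ?f = integral cube (\<lambda>x::real^'n. exp (a * (\<Sum>j\<in>UNIV. x$j)))"
      unfolding Zf_def f_lin_def a_def d_def n_def ..
    also have "\<dots> = q ^ n" unfolding q_def n_def by (rule Z_lin[OF a0])
    finally show ?thesis .
  qed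
  have ea: "1 - a \<le> exp (- a)" using exp_ge_add_one_self[of "-a"] by simp
  have "exp a * (1 - a) \<le> exp a * exp (- a)" by (rule mult_left_mono[OF ea]) simp
  then have ea2: "exp a - 1 \<le> a * exp a" by (simp add: exp_minus algebra_simps)
  have q0: "0 < q" unfolding q_def using a0 by simp
  have qA: "q \<le> exp a" unfolding q_def using a0 ea2 by (simp add: divide_le_eq mult.commute)
  have qB: "a * q \<le> exp a" unfolding q_def using a0 by simp
  have expB: "exp B = exp a ^ n" unfolding Bad d_def using exp_of_nat_mult[of n a] by (simp add: mult.commute)
  have dens1: "dens ?f one = exp B / q ^ n" unfolding dens_def Zeq fone ..
  have D1: "1 \<le> dens ?f one"
  proof -
    have "q ^ n \<le> exp a ^ n" by (rule power_mono[OF qA]) (use q0 in simp)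
    then show ?thesis unfolding dens1 expB using q0 by simp
  qed
  have D2: "a ^ n \<le> dens ?f one"
  proof -
    have "(a * q) ^ n \<le> exp a ^ n" by (rule power_mono[OF qB]) (use q0 a0 in simp)
    then have "a ^ n * q ^ n \<le> exp B" unfolding expB by (simp add: power_mult_distrib)
    then show ?thesis unfolding dens1 using q0 by (simp add: le_divide_eq)
  qed
  have U1: "ereal (dens ?f one) \<le> Cm_norm m (dens ?f)"
  proof -
    have "ereal \<bar>dpart [] (dens ?f) one\<bar> \<le> Cm_norm m (dens ?f)" unfolding Cm_norm_def
      by (rule SUP_upper2[of "([], one)"]) (use one in auto)
    then show ?thesis using D1 by simp
  qed
  have U2: "ereal (a ^ m * dens ?f one) \<le> Cm_norm m (dens ?f)"
  proof -
    have "ereal \<bar>dpart (replicate m undefined) (dens ?f) one\<bar> \<le> Cm_norm m (dens ?f)" unfolding Cm_norm_def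
      by (rule SUP_upper2[of "(replicate m undefined, one)"]) (use one in auto)
    moreover have "dpart (replicate m undefined) (dens ?f) one = a ^ m * dens ?f one"
      using flin_dens_rep[of m undefined B] one unfolding a_def d_def n_def by blast
    ultimately show ?thesis using D1 a0 by simp
  qed
  show ?thesis
  proof (cases "B \<le> 1")
    case True
    have "(1 / real CARD('n)) ^ (m + CARD('n)) * max 1 B ^ (m + CARD('n)) \<le> 1"
      using True d1 unfolding d_def n_def by (simp add: power_le_one)
    then show ?thesis using U1 D1 by (meson ereal_less_eq(3) order.trans)
  next
    case False
    have "(1 / real CARD('n)) ^ (m + CARD('n)) * max 1 B ^ (m + CARD('n)) = a ^ m * a ^ n"
      using False unfolding a_def d_def n_def by (simp add: power_add power_divide)
    also have "\<dots> \<le> a ^ m * dens ?f one" by (rule mult_left_mono[OF D2]) (use a0 in simp)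
    finally show ?thesis using U2 by (meson ereal_less_eq(3) order.trans)
  qed
qed

theorem theorem18:
  fixes m :: nat
  assumes "m \<ge> 1"
  shows "\<exists>c C. 0 < c \<and> 0 < C \<and>
    (\<forall>B>0.
       ereal (c * max 1 B ^ (m + CARD('n::finite)))
         \<le> (SUP f\<in>(Fclass m B :: (real^'n \<Rightarrow> real) set). Cm_norm m (dens f)) \<and>
       (SUP f\<in>(Fclass m B :: (real^'n \<Rightarrow> real) set). Cm_norm m (dens f))
         \<le> ereal (C * max 1 B ^ (m + CARD('n))) \<and>
       (f_lin B :: real^'n \<Rightarrow> real) \<in> Fclass m B \<and>
       ereal (c * max 1 B ^ (m + CARD('n))) \<le> Cm_norm m (dens (f_lin B :: real^'n \<Rightarrow> real)) \<and>
       Cm_norm m (dens (f_lin B :: real^'n \<Rightarrow> real)) \<le> ereal (C * max 1 B ^ (m + CARD('n))))"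
proof (intro exI conjI allI impI)
  let ?c = "(1 / real CARD('n)) ^ (m + CARD('n))"
  let ?C = "exp (real CARD('n)) * fact m"
  show "0 < ?c" by simp
  show "0 < ?C" by simp
  fix B :: real assume B0: "0 < B"
  have fl: "(f_lin B :: real^'n \<Rightarrow> real) \<in> Fclass m B" by (rule flin_Fclass[OF B0])
  show "(f_lin B :: real^'n \<Rightarrow> real) \<in> Fclass m B" by (rule fl)
  have lo: "ereal (?c * max 1 B ^ (m + CARD('n))) \<le> Cm_norm m (dens (f_lin B :: real^'n \<Rightarrow> real))"
    by (rule lower_lin[OF B0])
  then show "ereal (?c * max 1 B ^ (m + CARD('n))) \<le> Cm_norm m (dens (f_lin B :: real^'n \<Rightarrow> real))" .
  show "Cm_norm m (dens (f_lin B :: real^'n \<Rightarrow> real)) \<le> ereal (?C * max 1 B ^ (m + CARD('n)))"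
    by (rule upper_one[OF assms fl B0])
  have "Cm_norm m (dens (f_lin B :: real^'n \<Rightarrow> real)) \<le> (SUP f\<in>(Fclass m B :: (real^'n \<Rightarrow> real) set). Cm_norm m (dens f))"
    by (rule SUP_upper[OF fl])
  then show "ereal (?c * max 1 B ^ (m + CARD('n))) \<le> (SUP f\<in>(Fclass m B :: (real^'n \<Rightarrow> real) set). Cm_norm m (dens f))"
    using lo by (rule order.trans[rotated])
  show "(SUP f\<in>(Fclass m B :: (real^'n \<Rightarrow> real) set). Cm_norm m (dens f)) \<le> ereal (?C * max 1 B ^ (m + CARD('n)))"
    by (rule SUP_least) (rule upper_one[OF assms _ B0])
qed

end
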